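(* Let $X$ be a strictly convex Banach space and let $f: X \to X$ be Lipschitz continuous with constant $L$, i.e. $\|f(x)-f(y)\|_X \le L\|x-y\|_X$ for all $x,y\in X$. Let $x:\mathbb{R}\to X$ be a non-constant $T$-periodic solution (with $T>0$) of the ordinary differential equation $\dot x = f(x)$. Then $$TL > 6.$$
   Context: A Banach space is strictly convex if its closed unit ball is a strictly convex set, i.e. $\|x\|=\|y\|=1$ and $x\neq y$ imply $\|(x+y)/2\|<1$; equivalently, $\|u+v\|=\|u\|+\|v\|$ with $u,v\neq 0$ implies $u=\lambda v$ for some $\lambda>0$. *)

theory Defs
  imports "HOL-Analysis.Analysis"
begin

definition strictly_convex_space :: "'a::real_normed_vector itself \<Rightarrow> bool" where
  "strictly_convex_space _ \<longleftrightarrow>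
     (\<forall>u v :: 'a. norm u = 1 \<and> norm v = 1 \<and> u \<noteq> v \<longrightarrow> norm ((u + v) /\<^sub>R 2) < 1)"

end

theory Submission
  imports Defs
begin


locale psol =
  fixes f :: "'a::banach \<Rightarrow> 'a" and x :: "real \<Rightarrow> 'a" and L T :: real
  assumes lip: "\<And>u v. norm (f u - f v) \<le> L * norm (u - v)"
    and Tpos: "T > 0"
    and der: "\<And>t. (x has_vector_derivative f (x t)) (at t)"
    and per: "\<And>t. x (t + T) = x t"
    and ncst: "\<exists>s t. x s \<noteq> x t"
begin

definition y where "y t = f (x t)"

lemma Lnn: "L \<ge> 0"
proof -
  obtain s t where "x s \<noteq> x t" using ncst by blast
  hence "norm (x s - x t) > 0" by simp
  moreover have "0 \<le> L * norm (x s - x t)" using lip[of "x s" "x t"] norm_ge_zero[of "f (x s) - f (x t)"] by linarith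
  ultimately show ?thesis by (simp add: zero_le_mult_iff)
qed

lemma contf: "continuous_on A f"
proof -
  have "continuous_on UNIV f"
    unfolding continuous_on_iff
  proof safe
    fix u e assume "(e::real) > 0"
    show "\<exists>d>0. \<forall>v\<in>UNIV. dist v u < d \<longrightarrow> dist (f v) (f u) < e"
    proof (intro exI[of _ "e / (L + 1)"] conjI ballI impI)
      show "e / (L+1) > 0" using \<open>e>0\<close> Lnn by simp
      fix v assume "dist v u < e / (L+1)"
      hence "(L+1) * dist v u < e" using Lnn by (simp add: field_simps)
      moreover have "dist (f v) (f u) \<le> L * dist v u" using lip by (simp add: dist_norm)
      moreover have "L * dist v u \<le> (L+1) * dist v u" by (simp add: distrib_right)
      ultimately show "dist (f v) (f u) < e" by linarith
    qed
  qed
  thus ?thesis by (rule continuous_on_subset) simp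
qed

lemma contx: "continuous_on A x"
proof -
  have "\<forall>t\<in>A. isCont x t" using der has_vector_derivative_continuous by blast
  thus ?thesis by (simp add: continuous_at_imp_continuous_on)
qed

lemma contx_comp[continuous_intros]: "continuous_on A g \<Longrightarrow> continuous_on A (\<lambda>t. x (g t))"
  using continuous_on_compose2[OF contx[of UNIV] _ subset_UNIV] by blast

lemma conty_comp[continuous_intros]: "continuous_on A g \<Longrightarrow> continuous_on A (\<lambda>t. y (g t))"
  unfolding y_def
  using continuous_on_compose2[OF contf[of UNIV] contx_comp subset_UNIV] by blast

lemma per_nat: "x (t + real n * T) = x t"
proof (induction n arbitrary: t)
  case 0 then show ?case by simp
next
  case (Suc n)
  have "x (t + real (Suc n) * T) = x ((t + real n * T) + T)" by (simp add: algebra_simps)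
  also have "\<dots> = x t" using per Suc by simp
  finally show ?case .
qed

lemma per_int: "x (t + real_of_int k * T) = x t"
proof (cases "k \<ge> 0")
  case True
  then show ?thesis using per_nat[of t "nat k"] by simp
next
  case False
  define n where "n = nat (-k)"
  hence n: "k = - int n" using False by simp
  have "x t = x ((t - real n * T) + real n * T)" by simp
  also have "\<dots> = x (t - real n * T)" by (rule per_nat)
  finally show ?thesis using n by simp
qed

lemma per_minus: "x (t - T) = x t"
  using per_int[of t "-1"] by simp

lemma reduce: "\<exists>t'. t' \<in> {0..<T} \<and> (\<forall>h. x (t + h) = x (t' + h))"
proof -
  define k where "k = \<lfloor>t / T\<rfloor>"
  define t' where "t' = t - real_of_int k * T"
  have "real_of_int k \<le> t / T" "t / T < real_of_int k + 1" unfolding k_def by linarith+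
  hence "real_of_int k * T \<le> t" "t < (real_of_int k + 1) * T" using Tpos by (simp_all add: field_simps)
  hence "t' \<in> {0..<T}" unfolding t'_def by (auto simp: algebra_simps)
  moreover have "x (t + h) = x (t' + h)" for h
    using per_int[of "t' + h" k] unfolding t'_def by (simp add: algebra_simps)
  ultimately show ?thesis by blast
qed

lemma ybound: "\<exists>Y\<ge>0. \<forall>t. norm (y t) \<le> Y"
proof -
  have cy: "continuous_on {0..T} y" using conty_comp[OF continuous_on_id] by simp
  have "compact (y ` {0..T})"
    by (rule compact_continuous_image[OF cy compact_Icc])
  hence "bounded (y ` {0..T})" by (rule compact_imp_bounded)
  then obtain B where B: "\<forall>z\<in>y ` {0..T}. norm z \<le> B"
    unfolding bounded_iff by auto
  have "norm (y t) \<le> B" for t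
  proof -
    obtain t' where "t' \<in> {0..<T}" "\<forall>h. x (t + h) = x (t' + h)" using reduce by blast
    hence "x (t + 0) = x (t' + 0)" by blast
    hence "y t = y t'" unfolding y_def by simp
    thus ?thesis using B \<open>t' \<in> {0..<T}\<close> by auto
  qed
  moreover have "B \<ge> 0"
  proof -
    have "y 0 \<in> y ` {0..T}" using Tpos by simp
    hence "norm (y 0) \<le> B" using B by blast
    thus ?thesis using norm_ge_zero[of "y 0"] by linarith
  qed
  ultimately show ?thesis by blast
qed

end



context psol
begin

definition Y where "Y = (SOME Y. Y \<ge> 0 \<and> (\<forall>t. norm (y t) \<le> Y))"

lemma Y_prop: "Y \<ge> 0" "norm (y t) \<le> Y"
proof -
  have "Y \<ge> 0 \<and> (\<forall>t. norm (y t) \<le> Y)" unfolding Y_def using ybound by (rule someI_ex)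
  thus "Y \<ge> 0" "norm (y t) \<le> Y" by auto
qed

lemma dery: "(x has_vector_derivative y t) (at t)"
  using der unfolding y_def .

lemma xcomp_der: "((\<lambda>\<theta>. x (a + c*\<theta>)) has_vector_derivative (c *\<^sub>R y (a + c*\<theta>))) (at \<theta>)"
proof -
  have "((\<lambda>\<theta>. a + c*\<theta>) has_real_derivative c) (at \<theta>)"
    by (auto intro!: derivative_eq_intros)
  hence "((\<lambda>\<theta>. a + c*\<theta>) has_vector_derivative c) (at \<theta>)"
    by (simp add: has_real_derivative_iff_has_vector_derivative)
  from vector_diff_chain_at[OF this dery] show ?thesis by (simp add: o_def)
qed

lemma xlip_le: "a \<le> b \<Longrightarrow> norm (x b - x a) \<le> Y * (b - a)"
proof -
  assume ab: "a \<le> b"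
  have "(y has_integral (x b - x a)) {a..b}"
    using fundamental_theorem_of_calculus[OF ab] dery has_vector_derivative_at_within by blast
  thus ?thesis
    using has_integral_bound[of Y y "x b - x a" a b] Y_prop ab by auto
qed

lemma xlip: "norm (x b - x a) \<le> Y * \<bar>b - a\<bar>"
proof (cases "a \<le> b")
  case True thus ?thesis using xlip_le by simp
next
  case False
  hence "norm (x a - x b) \<le> Y * (a - b)" using xlip_le by simp
  thus ?thesis using False by (simp add: norm_minus_commute)
qed

definition D where "D h = Sup (range (\<lambda>s. norm (x (s + h) - x s)))"

lemma D_bdd: "bdd_above (range (\<lambda>s. norm (x (s + h) - x s)))"
proof -
  have "norm (x (s + h) - x s) \<le> Y * \<bar>h\<bar>" for s using xlip[of "s+h" s] by simp
  thus ?thesis by (intro bdd_aboveI2) blast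
qed

lemma D_upper: "norm (x (s + h) - x s) \<le> D h"
  unfolding D_def by (rule cSup_upper[OF _ D_bdd]) simp

lemma D_least: "(\<And>s. norm (x (s + h) - x s) \<le> B) \<Longrightarrow> D h \<le> B"
  unfolding D_def by (rule cSup_least) auto

lemma D_nn: "0 \<le> D h"
  using D_upper[of 0 h] norm_ge_zero[of "x (0 + h) - x 0"] by linarith

lemma D_lip1: "D h \<le> D h' + Y * \<bar>h - h'\<bar>"
proof (rule D_least)
  fix s
  have "norm (x (s + h) - x s) \<le> norm (x (s + h) - x (s + h')) + norm (x (s + h') - x s)"
    using norm_triangle_ineq[of "x (s+h) - x (s+h')" "x (s+h') - x s"] by simp
  also have "\<dots> \<le> Y * \<bar>h - h'\<bar> + D h'"
    using xlip[of "s+h" "s+h'"] D_upper[of s h'] by simp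
  finally show "norm (x (s + h) - x s) \<le> D h' + Y * \<bar>h - h'\<bar>" by simp
qed

lemma D_cont: "continuous_on A D"
proof -
  have "continuous_on UNIV D"
    unfolding continuous_on_iff
  proof safe
    fix u e assume "(e::real) > 0"
    show "\<exists>d>0. \<forall>v\<in>UNIV. dist v u < d \<longrightarrow> dist (D v) (D u) < e"
    proof (intro exI[of _ "e / (Y + 1)"] conjI ballI impI)
      show "e / (Y+1) > 0" using \<open>e>0\<close> Y_prop by simp
      fix v assume "dist v u < e / (Y+1)"
      hence "(Y+1) * \<bar>v - u\<bar> < e" using Y_prop by (simp add: field_simps dist_real_def)
      moreover have "\<bar>D v - D u\<bar> \<le> Y * \<bar>v - u\<bar>"
        using D_lip1[of v u] D_lip1[of u v] by (simp add: abs_minus_commute)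
      moreover have "Y * \<bar>v - u\<bar> \<le> (Y+1) * \<bar>v - u\<bar>" by (simp add: distrib_right)
      ultimately show "dist (D v) (D u) < e" by (simp add: dist_real_def)
    qed
  qed
  thus ?thesis by (rule continuous_on_subset) simp
qed

lemma D_attain: "\<exists>s0. norm (x (s0 + h) - x s0) = D h"
proof -
  have c: "continuous_on {0..T} (\<lambda>s. norm (x (s + h) - x s))"
    by (intro continuous_intros)
  obtain s0 where s0: "s0 \<in> {0..T}" "\<forall>s\<in>{0..T}. norm (x (s + h) - x s) \<le> norm (x (s0 + h) - x s0)"
    using continuous_attains_sup[OF compact_Icc _ c] Tpos by fastforce
  have "D h \<le> norm (x (s0 + h) - x s0)"
  proof (rule D_least)
    fix s
    obtain t' where t': "t' \<in> {0..<T}" "\<forall>k. x (s + k) = x (t' + k)" using reduce by blast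
    have "x s = x t'" using t'(2)[rule_format, of 0] by simp
    moreover have "x (s + h) = x (t' + h)" using t'(2) by blast
    ultimately show "norm (x (s + h) - x s) \<le> norm (x (s0 + h) - x s0)"
      using s0(2) t'(1) by auto
  qed
  thus ?thesis using D_upper[of s0 h] by (intro exI[of _ s0]) linarith
qed

definition Vf where
  "Vf s \<rho> \<theta> = (T*\<rho>*(1-\<rho>)) *\<^sub>R (y (s + T*\<rho>*\<theta>) - y (s - T*(1-\<rho>)*\<theta>))"
definition Ff where
  "Ff s \<rho> \<theta> = (1-\<rho>) *\<^sub>R x (s + T*\<rho>*\<theta>) + \<rho> *\<^sub>R x (s - T*(1-\<rho>)*\<theta>)"

lemma Ff_der: "(Ff s \<rho> has_vector_derivative Vf s \<rho> \<theta>) (at \<theta>)"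
proof -
  have 1: "((\<lambda>\<theta>. x (s + (T*\<rho>)*\<theta>)) has_vector_derivative ((T*\<rho>) *\<^sub>R y (s + (T*\<rho>)*\<theta>))) (at \<theta>)"
    by (rule xcomp_der)
  have 2: "((\<lambda>\<theta>. x (s + (-(T*(1-\<rho>)))*\<theta>)) has_vector_derivative
            ((-(T*(1-\<rho>))) *\<^sub>R y (s + (-(T*(1-\<rho>)))*\<theta>))) (at \<theta>)"
    by (rule xcomp_der)
  have "((\<lambda>\<theta>. (1-\<rho>) *\<^sub>R x (s + (T*\<rho>)*\<theta>) + \<rho> *\<^sub>R x (s + (-(T*(1-\<rho>)))*\<theta>)) has_vector_derivative
         ((1-\<rho>) *\<^sub>R ((T*\<rho>) *\<^sub>R y (s + (T*\<rho>)*\<theta>)) + \<rho> *\<^sub>R ((-(T*(1-\<rho>))) *\<^sub>R y (s + (-(T*(1-\<rho>)))*\<theta>)))) (at \<theta>)"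
    by (intro has_vector_derivative_add has_vector_derivative_scaleR[where f="\<lambda>_. _" and f'=0, simplified] 1 2 DERIV_const)
  moreover have "(\<lambda>\<theta>. (1-\<rho>) *\<^sub>R x (s + (T*\<rho>)*\<theta>) + \<rho> *\<^sub>R x (s + (-(T*(1-\<rho>)))*\<theta>)) = Ff s \<rho>"
    unfolding Ff_def by (auto simp: algebra_simps)
  moreover have "(1-\<rho>) *\<^sub>R ((T*\<rho>) *\<^sub>R y (s + (T*\<rho>)*\<theta>)) + \<rho> *\<^sub>R ((-(T*(1-\<rho>))) *\<^sub>R y (s + (-(T*(1-\<rho>)))*\<theta>)) = Vf s \<rho> \<theta>"
    unfolding Vf_def by (simp add: algebra_simps)
  ultimately show ?thesis by simp
qed

lemma Ff_int: "a \<le> b \<Longrightarrow> (Vf s \<rho> has_integral (Ff s \<rho> b - Ff s \<rho> a)) {a..b}"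
  using fundamental_theorem_of_calculus Ff_der has_vector_derivative_at_within by blast

lemma Ff0: "Ff s \<rho> 0 = x s"
  unfolding Ff_def by (simp add: scaleR_left_distrib[symmetric])

lemma Ff1: "Ff s \<rho> 1 = x (s + T*\<rho>)"
proof -
  have "x (s - T*(1-\<rho>)*1) = x (s + T*\<rho>)"
    using per_minus[of "s + T*\<rho>"] by (simp add: algebra_simps)
  thus ?thesis unfolding Ff_def by (simp add: scaleR_left_distrib[symmetric])
qed

lemma Vf_bound0:
  assumes "0 \<le> \<rho>" "\<rho> \<le> 1"
  shows "norm (Vf s \<rho> \<theta>) \<le> T*\<rho>*(1-\<rho>)*L * norm (x (s + T*\<rho>*\<theta>) - x (s - T*(1-\<rho>)*\<theta>))"
proof -
  have K: "T*\<rho>*(1-\<rho>) \<ge> 0" using assms Tpos by simp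
  have "norm (y (s + T*\<rho>*\<theta>) - y (s - T*(1-\<rho>)*\<theta>)) \<le> L * norm (x (s + T*\<rho>*\<theta>) - x (s - T*(1-\<rho>)*\<theta>))"
    using lip unfolding y_def by blast
  hence "T*\<rho>*(1-\<rho>) * norm (y (s + T*\<rho>*\<theta>) - y (s - T*(1-\<rho>)*\<theta>)) \<le> T*\<rho>*(1-\<rho>) * (L * norm (x (s + T*\<rho>*\<theta>) - x (s - T*(1-\<rho>)*\<theta>)))"
    using K by (rule mult_left_mono)
  thus ?thesis unfolding Vf_def using K by (simp add: mult.assoc)
qed

lemma Vf_bound:
  assumes "0 \<le> \<rho>" "\<rho> \<le> 1"
  shows "norm (Vf s \<rho> \<theta>) \<le> T*\<rho>*(1-\<rho>)*L * D (T*\<theta>)"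
proof -
  have K: "T*\<rho>*(1-\<rho>)*L \<ge> 0" using assms Tpos Lnn by simp
  define b where "b = s - T*(1-\<rho>)*\<theta>"
  have e: "s + T*\<rho>*\<theta> = b + T*\<theta>" unfolding b_def by (simp add: algebra_simps)
  have "norm (x (s + T*\<rho>*\<theta>) - x (s - T*(1-\<rho>)*\<theta>)) \<le> D (T*\<theta>)"
    unfolding e b_def[symmetric] by (rule D_upper)
  hence "T*\<rho>*(1-\<rho>)*L * norm (x (s + T*\<rho>*\<theta>) - x (s - T*(1-\<rho>)*\<theta>)) \<le> T*\<rho>*(1-\<rho>)*L * D (T*\<theta>)"
    using K by (rule mult_left_mono)
  thus ?thesis using Vf_bound0[OF assms, of s \<theta>] by linarith
qed

end



lemma poly_int:
  assumes "a \<le> b"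
  shows "((\<lambda>\<theta>::real. \<theta>*(1-\<theta>)) has_integral ((b^2/2 - b^3/3) - (a^2/2 - a^3/3))) {a..b}"
proof -
  have "((\<lambda>\<theta>::real. \<theta>^2/2 - \<theta>^3/3) has_real_derivative (t*(1-t))) (at t within {a..b})" for t
    by (auto intro!: derivative_eq_intros simp: power2_eq_square algebra_simps)
  hence "((\<lambda>\<theta>::real. \<theta>^2/2 - \<theta>^3/3) has_vector_derivative (t*(1-t))) (at t within {a..b})" for t
    by (simp add: has_real_derivative_iff_has_vector_derivative)
  from fundamental_theorem_of_calculus[OF assms this] show ?thesis by simp
qed

lemma poly_int01: "((\<lambda>\<theta>::real. \<theta>*(1-\<theta>)) has_integral (1/6)) {0..1}"
  using poly_int[of 0 1] by (simp add: power2_eq_square power3_eq_cube)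
lemma poly_int0h: "((\<lambda>\<theta>::real. \<theta>*(1-\<theta>)) has_integral (1/12)) {0..1/2}"
  using poly_int[of 0 "1/2"] by (simp add: power2_eq_square power3_eq_cube)
lemma poly_inth1: "((\<lambda>\<theta>::real. \<theta>*(1-\<theta>)) has_integral (1/12)) {1/2..1}"
  using poly_int[of "1/2" 1] by (simp add: power2_eq_square power3_eq_cube)

context psol
begin

definition J where "J = integral {0..1} (\<lambda>\<theta>. D (T*\<theta>))"

lemma dcont: "continuous_on A (\<lambda>\<theta>. D (T*\<theta>))"
  using continuous_on_compose2[OF D_cont[of UNIV], of A "\<lambda>\<theta>. T*\<theta>"]
  by (auto intro!: continuous_intros)

lemma dint: "(\<lambda>\<theta>. D (T*\<theta>)) integrable_on {a..b}"
  by (rule integrable_continuous_interval[OF dcont])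

lemma key_s:
  assumes "0 \<le> \<rho>" "\<rho> \<le> 1"
  shows "norm (x (s + T*\<rho>) - x s) \<le> T*L*\<rho>*(1-\<rho>)*J"
proof -
  have hi: "(Vf s \<rho> has_integral (x (s + T*\<rho>) - x s)) {0..1}"
    using Ff_int[of 0 1 s \<rho>] Ff0 Ff1 by simp
  have i1: "Vf s \<rho> integrable_on {0..1}" using hi by blast
  have i2: "(\<lambda>\<theta>. T*\<rho>*(1-\<rho>)*L * D (T*\<theta>)) integrable_on {0..1}"
    by (intro integrable_continuous_interval continuous_intros dcont)
  have "norm (integral {0..1} (Vf s \<rho>)) \<le> integral {0..1} (\<lambda>\<theta>. T*\<rho>*(1-\<rho>)*L * D (T*\<theta>))"
    by (rule integral_norm_bound_integral[OF i1 i2 Vf_bound[OF assms]])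
  also have "\<dots> = T*\<rho>*(1-\<rho>)*L * J" unfolding J_def by simp
  finally show ?thesis using hi by (simp add: integral_unique mult_ac)
qed

lemma key:
  assumes "0 \<le> \<rho>" "\<rho> \<le> 1"
  shows "D (T*\<rho>) \<le> T*L*\<rho>*(1-\<rho>)*J"
  using key_s[OF assms] by (intro D_least) simp

lemma exists_pos: "\<exists>\<rho>\<in>{0..1}. D (T*\<rho>) > 0"
proof -
  obtain s t where st: "x s \<noteq> x t" using ncst by blast
  define k where "k = \<lfloor>(t - s) / T\<rfloor>"
  define h where "h = (t - s) - real_of_int k * T"
  have "real_of_int k \<le> (t - s) / T" "(t - s) / T < real_of_int k + 1" unfolding k_def by linarith+
  hence "real_of_int k * T \<le> t - s" "t - s < (real_of_int k + 1) * T" using Tpos by (simp_all add: field_simps)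
  hence h: "0 \<le> h" "h < T" unfolding h_def by (auto simp: algebra_simps)
  have "x (s + h) = x t" using per_int[of "s + h" k] unfolding h_def by (simp add: algebra_simps)
  hence "norm (x (s + h) - x s) > 0" using st by simp
  hence "D h > 0" using D_upper[of s h] by linarith
  moreover have "T * (h / T) = h" using Tpos by simp
  ultimately show ?thesis using h Tpos by (intro bexI[of _ "h/T"]) auto
qed

lemma J_pos: "J > 0"
proof -
  have "J \<ge> 0" unfolding J_def by (rule integral_nonneg[OF dint]) (simp add: D_nn)
  moreover have "J \<noteq> 0"
  proof
    assume "J = 0"
    hence z: "((\<lambda>\<theta>. D (T*\<theta>)) has_integral 0) (cbox 0 1)"
      using dint[of 0 1] unfolding J_def by (simp add: has_integral_integral)
    obtain \<rho> where r: "\<rho> \<in> {0..1}" "D (T*\<rho>) > 0" using exists_pos by blast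
    have "D (T*\<rho>) = 0"
      by (rule has_integral_0_cbox_imp_0[OF _ _ z]) (use dcont D_nn r in auto)
    thus False using r by simp
  qed
  ultimately show ?thesis by simp
qed

lemma TL_ge: "T * L \<ge> 6"
proof -
  have pi: "((\<lambda>\<rho>. (T*L*J) * (\<rho>*(1-\<rho>))) has_integral (T*L*J)*(1/6)) {0..1}"
    by (rule has_integral_mult_right[OF poly_int01])
  have hJ: "((\<lambda>\<theta>. D (T*\<theta>)) has_integral J) {0..1}"
    using dint[of 0 1] unfolding J_def by (simp add: has_integral_integral)
  have "J \<le> (T*L*J)*(1/6)"
    by (rule has_integral_le[OF hJ pi]) (use key in \<open>auto simp: mult_ac\<close>)
  hence "J * 6 \<le> (T*L) * J" by simp
  thus ?thesis using J_pos by (simp add: mult.commute)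
qed

end



lemma sc_eq:
  fixes P Q :: "'a::real_normed_vector"
  assumes sc: "strictly_convex_space TYPE('a)"
    and "norm P = m" "norm Q = m" "m > 0" "norm (P + Q) = 2*m"
  shows "P = Q"
proof (rule ccontr)
  assume ne: "P \<noteq> Q"
  define u where "u = P /\<^sub>R m"
  define v where "v = Q /\<^sub>R m"
  have "norm u = 1" "norm v = 1" unfolding u_def v_def using assms by auto
  moreover have "u \<noteq> v" unfolding u_def v_def using ne \<open>m>0\<close> by auto
  ultimately have "norm ((u + v) /\<^sub>R 2) < 1" using sc unfolding strictly_convex_space_def by blast
  moreover have "(u + v) /\<^sub>R 2 = (P + Q) /\<^sub>R (2*m)" unfolding u_def v_def
    by (simp add: scaleR_add_right)
  moreover have "norm ((P + Q) /\<^sub>R (2*m)) = 1" using assms by (simp add: abs_of_pos)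
  ultimately show False by (metis less_irrefl)
qed

context psol
begin

lemma E1:
  assumes TL: "T * L = 6" and r: "\<rho> \<in> {0..1}"
  shows "D (T*\<rho>) = 6*\<rho>*(1-\<rho>)*J"
proof -
  define \<phi> where "\<phi> \<rho> = (6*J) * (\<rho>*(1-\<rho>)) - D (T*\<rho>)" for \<rho>
  have hJ: "((\<lambda>\<theta>. D (T*\<theta>)) has_integral J) {0..1}"
    using dint[of 0 1] unfolding J_def by (simp add: has_integral_integral)
  have "(\<phi> has_integral ((6*J)*(1/6) - J)) {0..1}"
    unfolding \<phi>_def by (intro has_integral_diff has_integral_mult_right poly_int01 hJ)
  hence z: "(\<phi> has_integral 0) (cbox 0 1)" by simp
  have "\<phi> \<rho> = 0"
  proof (rule has_integral_0_cbox_imp_0[OF _ _ z])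
    show "continuous_on (cbox 0 1) \<phi>" unfolding \<phi>_def by (intro continuous_intros dcont)
    fix t :: real assume "t \<in> box 0 1"
    hence "0 \<le> t" "t \<le> 1" by auto
    have "T*L*t*(1-t)*J = (T*L)*(t*(1-t)*J)" by (simp add: mult_ac)
    hence "T*L*t*(1-t)*J = (6*J)*(t*(1-t))" using TL by simp
    thus "0 \<le> \<phi> t" unfolding \<phi>_def using key[of t] \<open>0 \<le> t\<close> \<open>t \<le> 1\<close> by linarith
  qed (use r in auto)
  thus ?thesis unfolding \<phi>_def by (simp add: mult_ac)
qed

end



context psol
begin

lemma E2:
  assumes TL: "T * L = 6"
  shows "\<exists>s0. norm (x (s0 + T*(1/2)) - x s0) = 3/2*J \<and>
     (\<forall>\<theta>\<in>{0..1}. norm (x (s0 + T*(1/2)*\<theta>) - x (s0 - T*(1-1/2)*\<theta>)) = D (T*\<theta>))"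
proof -
  obtain s0 where s0: "norm (x (s0 + T*(1/2)) - x s0) = D (T*(1/2))" using D_attain by blast
  have d12: "D (T*(1/2)) = 3/2*J" using E1[OF TL, of "1/2"] by simp
  define g where "g \<theta> = norm (x (s0 + T*(1/2)*\<theta>) - x (s0 - T*(1-1/2)*\<theta>))" for \<theta>
  have gc: "continuous_on A g" for A unfolding g_def by (intro continuous_intros)
  have gint: "g integrable_on {0..1}" by (rule integrable_continuous_interval[OF gc])
  have hi: "(Vf s0 (1/2) has_integral (x (s0 + T*(1/2)) - x s0)) {0..1}"
    using Ff_int[of 0 1 s0 "1/2"] Ff0 Ff1 by simp
  have i1: "Vf s0 (1/2) integrable_on {0..1}" using hi by blast
  have i2: "(\<lambda>\<theta>. T*(1/2)*(1-1/2)*L * g \<theta>) integrable_on {0..1}"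
    by (intro integrable_continuous_interval continuous_intros gc)
  have "norm (integral {0..1} (Vf s0 (1/2))) \<le> integral {0..1} (\<lambda>\<theta>. T*(1/2)*(1-1/2)*L * g \<theta>)"
    by (rule integral_norm_bound_integral[OF i1 i2]) (use Vf_bound0[of "1/2" s0] in \<open>simp add: g_def\<close>)
  also have "\<dots> = T*(1/2)*(1-1/2)*L * integral {0..1} g" by simp
  also have "T*(1/2)*(1-1/2)*L = 3/2" using TL by simp
  finally have "3/2*J \<le> 3/2 * integral {0..1} g" using hi s0 d12 by (simp add: integral_unique)
  hence gJ: "J \<le> integral {0..1} g" by simp
  define \<psi> where "\<psi> \<theta> = D (T*\<theta>) - g \<theta>" for \<theta>
  have hJ: "((\<lambda>\<theta>. D (T*\<theta>)) has_integral J) {0..1}"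
    using dint[of 0 1] unfolding J_def by (simp add: has_integral_integral)
  have psi_nn: "0 \<le> \<psi> \<theta>" for \<theta>
  proof -
    have e: "s0 + T*(1/2)*\<theta> = (s0 - T*(1-1/2)*\<theta>) + T*\<theta>" by (simp add: algebra_simps)
    have "norm (x ((s0 - T*(1-1/2)*\<theta>) + T*\<theta>) - x (s0 - T*(1-1/2)*\<theta>)) \<le> D (T*\<theta>)"
      by (rule D_upper)
    thus ?thesis unfolding \<psi>_def g_def e by simp
  qed
  have "(\<psi> has_integral (J - integral {0..1} g)) {0..1}"
    unfolding \<psi>_def by (intro has_integral_diff hJ) (use gint in \<open>simp add: has_integral_integral\<close>)
  moreover have "J - integral {0..1} g \<ge> 0"
    using has_integral_nonneg[OF calculation] psi_nn by simp
  ultimately have z: "(\<psi> has_integral 0) (cbox 0 1)" using gJ by simp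
  have "\<forall>\<theta>\<in>{0..1}. \<psi> \<theta> = 0"
  proof
    fix \<theta> :: real assume th: "\<theta> \<in> {0..1}"
    show "\<psi> \<theta> = 0"
      by (rule has_integral_0_cbox_imp_0[OF _ _ z]) 
         (use th psi_nn in \<open>auto simp: \<psi>_def intro!: continuous_intros dcont gc\<close>)
  qed
  hence "\<forall>\<theta>\<in>{0..1}. g \<theta> = D (T*\<theta>)" unfolding \<psi>_def by simp
  hence "\<forall>\<theta>\<in>{0..1}. norm (x (s0 + T*(1/2)*\<theta>) - x (s0 - T*(1-1/2)*\<theta>)) = D (T*\<theta>)"
    unfolding g_def .
  moreover have "norm (x (s0 + T*(1/2)) - x s0) = 3/2*J" using s0 d12 by simp
  ultimately show ?thesis by blast
qed

end



context psol
begin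

lemma E3:
  assumes TL: "T * L = 6" and sc: "strictly_convex_space TYPE('a)"
    and s0: "\<forall>\<theta>\<in>{0..1}. norm (x (s0 + T*(1/2)*\<theta>) - x (s0 - T*(1-1/2)*\<theta>)) = D (T*\<theta>)"
    and r: "0 < \<rho>" "\<rho> < 1"
  shows "x (s0 + (T/2)*\<rho>) + x (s0 + (-(T/2))*\<rho>) = (2*(1-\<rho>)) *\<^sub>R x s0 + (2*\<rho>) *\<^sub>R x (s0 + T/2)"
proof -
  define b where "b = s0 - T*\<rho>/2"
  define m where "m = 3*\<rho>*(1-\<rho>)*J"
  have mpos: "m > 0" unfolding m_def using r J_pos by simp
  have r01: "0 \<le> \<rho>" "\<rho> \<le> 1" using r by auto
  have bnd: "norm (Vf b \<rho> \<theta>) \<le> (36*\<rho>*(1-\<rho>)*J) * (\<theta>*(1-\<theta>))" if "\<theta> \<in> {0..1}" for \<theta>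
  proof -
    have "norm (Vf b \<rho> \<theta>) \<le> T*\<rho>*(1-\<rho>)*L * D (T*\<theta>)" by (rule Vf_bound[OF r01])
    also have "D (T*\<theta>) = 6*\<theta>*(1-\<theta>)*J" by (rule E1[OF TL that])
    also have "T*\<rho>*(1-\<rho>)*L * (6*\<theta>*(1-\<theta>)*J) = (T*L)*(6*\<rho>*(1-\<rho>)*J) * (\<theta>*(1-\<theta>))"
      by (simp only: mult_ac)
    finally show ?thesis using TL by simp
  qed
  have half: "norm (Ff b \<rho> v - Ff b \<rho> u) \<le> m"
    if uv: "0 \<le> u" "u \<le> v" "v \<le> 1" and pi: "((\<lambda>\<theta>::real. \<theta>*(1-\<theta>)) has_integral (1/12)) {u..v}" for u v
  proof -
    have hi: "(Vf b \<rho> has_integral (Ff b \<rho> v - Ff b \<rho> u)) {u..v}" by (rule Ff_int[OF uv(2)])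
    have pi2: "((\<lambda>\<theta>. (36*\<rho>*(1-\<rho>)*J) * (\<theta>*(1-\<theta>))) has_integral (36*\<rho>*(1-\<rho>)*J)*(1/12)) {u..v}"
      by (rule has_integral_mult_right[OF pi])
    have "norm (integral {u..v} (Vf b \<rho>)) \<le> integral {u..v} (\<lambda>\<theta>. (36*\<rho>*(1-\<rho>)*J) * (\<theta>*(1-\<theta>)))"
      by (rule integral_norm_bound_integral) (use hi pi2 bnd uv in auto)
    moreover have "integral {u..v} (\<lambda>\<theta>. (36*\<rho>*(1-\<rho>)*J) * (\<theta>*(1-\<theta>))) = m"
      unfolding m_def using integral_unique[OF pi2] by simp
    moreover have "integral {u..v} (Vf b \<rho>) = Ff b \<rho> v - Ff b \<rho> u" by (rule integral_unique[OF hi])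
    ultimately show ?thesis by simp
  qed
  define P where "P = Ff b \<rho> (1/2) - Ff b \<rho> 0"
  define Q where "Q = Ff b \<rho> 1 - Ff b \<rho> (1/2)"
  have nP: "norm P \<le> m" unfolding P_def by (rule half) (use poly_int0h in auto)
  have nQ: "norm Q \<le> m" unfolding Q_def by (rule half) (use poly_inth1 in auto)
  have "P + Q = x (b + T*\<rho>) - x b" unfolding P_def Q_def using Ff0 Ff1 by simp
  also have "b + T*\<rho> = s0 + T*(1/2)*\<rho>" unfolding b_def by simp
  also have "b = s0 - T*(1-1/2)*\<rho>" unfolding b_def by simp
  finally have "norm (P + Q) = D (T*\<rho>)" using s0 r01 by simp
  also have "\<dots> = 2*m" unfolding m_def using E1[OF TL, of \<rho>] r01 by simp
  finally have nPQ: "norm (P + Q) = 2*m" .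
  have "norm (P + Q) \<le> norm P + norm Q" by (rule norm_triangle_ineq)
  hence "norm P = m" "norm Q = m" using nP nQ nPQ by linarith+
  hence PQ: "P = Q" using sc_eq[OF sc _ _ mpos nPQ] by blast
  hence "2 *\<^sub>R Ff b \<rho> (1/2) = Ff b \<rho> 0 + Ff b \<rho> 1" unfolding P_def Q_def
    by (simp add: algebra_simps scaleR_2)
  also have "Ff b \<rho> 0 + Ff b \<rho> 1 = x (s0 + (-(T/2))*\<rho>) + x (s0 + (T/2)*\<rho>)"
    using Ff0 Ff1 unfolding b_def by (simp add: algebra_simps)
  also have "Ff b \<rho> (1/2) = (1-\<rho>) *\<^sub>R x s0 + \<rho> *\<^sub>R x (s0 + T/2)"
  proof -
    have e1: "b + T*\<rho>*(1/2) = s0" unfolding b_def by simp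
    have e2: "b - T*(1-\<rho>)*(1/2) = (s0 + T/2) - T" unfolding b_def by (simp add: field_simps)
    show ?thesis unfolding Ff_def e1 e2 per_minus ..
  qed
  finally show ?thesis by (simp add: algebra_simps scaleR_2)
qed

end



context psol
begin

lemma main_loc:
  assumes sc: "strictly_convex_space TYPE('a)"
  shows "T * L > 6"
proof (rule ccontr)
  assume "\<not> T * L > 6"
  hence TL: "T * L = 6" using TL_ge by simp
  obtain s0 where s0a: "norm (x (s0 + T*(1/2)) - x s0) = 3/2*J"
    and s0b: "\<forall>\<theta>\<in>{0..1}. norm (x (s0 + T*(1/2)*\<theta>) - x (s0 - T*(1-1/2)*\<theta>)) = D (T*\<theta>)"
    using E2[OF TL] by blast
  define w where "w = x (s0 + T/2)"
  define k where "k \<rho> = (T/2) *\<^sub>R y (s0 + (T/2)*\<rho>) + (-(T/2)) *\<^sub>R y (s0 + (-(T/2))*\<rho>)" for \<rho>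
  define c where "c = 2 *\<^sub>R (w - x s0)"
  have keq: "k \<rho> = c" if r: "0 < \<rho>" "\<rho> < 1" for \<rho>
  proof -
    have G: "((\<lambda>\<rho>. x (s0 + (T/2)*\<rho>) + x (s0 + (-(T/2))*\<rho>)) has_vector_derivative k \<rho>) (at \<rho>)"
      unfolding k_def by (intro has_vector_derivative_add xcomp_der)
    have H0: "((\<lambda>\<rho>. (2 *\<^sub>R x s0) + \<rho> *\<^sub>R c) has_vector_derivative (0 + c)) (at \<rho>)"
    proof -
      have "((\<lambda>\<rho>. \<rho> *\<^sub>R c) has_vector_derivative c) (at \<rho>)"
        unfolding has_vector_derivative_def by (auto intro!: derivative_eq_intros)
      thus ?thesis by (intro has_vector_derivative_add has_vector_derivative_const)
    qed
    have eqH: "x (s0 + (T/2)*t) + x (s0 + (-(T/2))*t) = (2 *\<^sub>R x s0) + t *\<^sub>R c"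
      if "t \<in> {0<..<1}" for t
    proof -
      have "x (s0 + (T/2)*t) + x (s0 + (-(T/2))*t) = (2*(1-t)) *\<^sub>R x s0 + (2*t) *\<^sub>R x (s0 + T/2)"
        using E3[OF TL sc s0b, of t] that by simp
      also have "\<dots> = (2 *\<^sub>R x s0) + t *\<^sub>R c" unfolding c_def w_def
        by (simp add: algebra_simps)
      finally show ?thesis .
    qed
    have "((\<lambda>\<rho>. (2 *\<^sub>R x s0) + \<rho> *\<^sub>R c) has_vector_derivative k \<rho>) (at \<rho>)"
      by (rule has_vector_derivative_transform_within_open[OF G, of "{0<..<1}"]) (use r eqH in auto)
    from vector_derivative_unique_at[OF this H0] show ?thesis by simp
  qed
  have kc: "continuous_on UNIV k" unfolding k_def by (intro continuous_intros)
  hence "(k \<longlongrightarrow> k 0) (at 0)" unfolding continuous_on_def by auto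
  hence "(k \<longlongrightarrow> k 0) (at_right 0)" by (rule tendsto_within_subset) simp
  moreover have "eventually (\<lambda>\<rho>. k \<rho> = c) (at_right 0)"
    unfolding eventually_at_right_field by (intro exI[of _ 1]) (auto intro: keq)
  ultimately have "((\<lambda>_::real. c) \<longlongrightarrow> k 0) (at_right (0::real))" using Lim_transform_eventually[of k "k 0" "at_right 0" "\<lambda>_. c"] by simp
  hence "c = k 0" using tendsto_unique[OF trivial_limit_at_right_real tendsto_const] by blast
  also have "k 0 = 0" unfolding k_def by simp
  finally have "w = x s0" unfolding c_def by simp
  hence "norm (x (s0 + T*(1/2)) - x s0) = 0" unfolding w_def by simp
  thus False using s0a J_pos by simp
qed

end


theorem theorem1:
  fixes f :: "'a::banach \<Rightarrow> 'a" and x :: "real \<Rightarrow> 'a" and L T :: real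
  assumes "strictly_convex_space TYPE('a)"
    and "\<And>u v. norm (f u - f v) \<le> L * norm (u - v)"
    and "T > 0"
    and "\<And>t. (x has_vector_derivative f (x t)) (at t)"
    and "\<And>t. x (t + T) = x t"
    and "\<exists>s t. x s \<noteq> x t"
  shows "T * L > 6"
proof -
  interpret psol f x L T using assms(2-6) by unfold_locales auto
  show ?thesis by (rule main_loc[OF assms(1)])
qed

end
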